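(* Let $\mathbf{A}\in\mathbb{R}^{m\times n}$ have rank $\rho$ with thin SVD $\mathbf{A}=\mathbf{U}_k\mathbf{\Sigma}_k\mathbf{V}_k^{T}+\mathbf{U}_{\rho-k}\mathbf{\Sigma}_{\rho-k}\mathbf{V}_{\rho-k}^{T}$, where $1\le k<\rho$, $\mathbf{U}_k\in\mathbb{R}^{m\times k}$, $\mathbf{V}_k\in\mathbb{R}^{n\times k}$ hold the top $k$ left/right singular vectors, $\mathbf{U}_{\rho-k},\mathbf{V}_{\rho-k}$ hold the remaining $\rho-k$ ones, and the singular values are $\sigma_1\ge\dots\ge\sigma_\rho>0$; let $\gamma_k=\sigma_{k+1}/\sigma_k$. Let $p\ge0$ be an integer and $\mathbf{S}\in\mathbb{R}^{n\times k}$ any matrix. Let $(\mathbf{A}\mathbf{A}^{T})^p\mathbf{A}\mathbf{S}=\mathbf{Q}\mathbf{R}$ be a QR factorization with $\mathbf{Q}\in\mathbb{R}^{m\times k}$ having orthonormal columns and $\mathbf{R}\in\mathbb{R}^{k\times k}$, let $\mathbf{Q}^{T}\mathbf{A}=\mathbf{U}_{\mathbf{Q}^{T}\mathbf{A}}\mathbf{\Sigma}_{\mathbf{Q}^{T}\mathbf{A}}\mathbf{V}_{\mathbf{Q}^{T}\mathbf{A}}^{T}$ be an SVD with $\mathbf{U}_{\mathbf{Q}^{T}\mathbf{A}}\in\mathbb{R}^{k\times k}$ orthogonal, and set $\tilde{\mathbf{U}}_k=\mathbf{Q}\mathbf{U}_{\mathbf{Q}^{T}\mathbf{A}}$. Then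 $$\sigma_k(\mathbf{V}_k^{T}\mathbf{S})\,\|\mathbf{U}_k\mathbf{U}_k^{T}-\tilde{\mathbf{U}}_k\tilde{\mathbf{U}}_k^{T}\|_2\le\gamma_k^{2p+1}\,\sigma_1(\mathbf{V}_{\rho-k}^{T}\mathbf{S}).$$
   Context: $\sigma_i(\mathbf{M})$ denotes the $i$-th largest singular value of a matrix $\mathbf{M}$, and $\|\cdot\|_2$ is the spectral norm. *)

theory Defs
  imports "HOL-Analysis.Analysis"
begin

text \<open>i-th largest singular value (1-indexed) of a real matrix, via the
  Courant--Fischer max-min formula over i-dimensional subspaces of the domain.\<close>
definition sing_val :: "real^'n^'m \<Rightarrow> nat \<Rightarrow> real" where
  "sing_val M i =
     (SUP W \<in> {W :: (real^'n) set. subspace W \<and> dim W = i}.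
        INF x \<in> {x \<in> W. norm x = 1}. norm (M *v x))"

definition spec_norm :: "real^'n^'m \<Rightarrow> real" where
  "spec_norm M = onorm (\<lambda>x. M *v x)"

definition mat_pow :: "real^'n^'n \<Rightarrow> nat \<Rightarrow> real^'n^'n" where
  "mat_pow B p = (((**) B) ^^ p) (mat 1)"

end

theory Submission imports Defs begin

declare transpose_matrix_vector [simp del]

lemma mv_inner: "(M *v u) \<bullet> y = u \<bullet> (transpose M *v y)" for M :: "real^'a::finite^'b::finite"
  by (simp add: inner_vec_def matrix_vector_mult_def transpose_def sum_distrib_left sum_distrib_right
      mult.assoc mult.left_commute) (rule sum.swap)

lemma orth_inv: assumes "transpose M ** M = mat 1"
  shows "transpose M *v (M *v u) = u"
  using assms by (simp add: matrix_vector_mul_assoc)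

lemma orth_norm: fixes M :: "real^'a::finite^'b::finite"
  assumes "transpose M ** M = mat 1"
  shows "norm (M *v u) = norm u"
proof -
  have "(M *v u) \<bullet> (M *v u) = u \<bullet> u" by (simp add: mv_inner orth_inv[OF assms])
  then show ?thesis by (simp add: norm_eq_sqrt_inner)
qed

lemma orth_perp: fixes M :: "real^'a::finite^'b::finite"
  assumes "transpose M ** M = mat 1"
  shows "(M *v u) \<bullet> (y - M *v (transpose M *v y)) = 0"
  by (simp add: mv_inner inner_diff_right orth_inv[OF assms])

lemma orth_pyth: fixes M :: "real^'a::finite^'b::finite"
  assumes "transpose M ** M = mat 1"
  shows "norm y ^ 2 = norm (M *v (transpose M *v y)) ^ 2 + norm (y - M *v (transpose M *v y)) ^ 2"
proof -
  let ?p = "M *v (transpose M *v y)"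
  have "norm (?p + (y - ?p)) ^ 2 = norm ?p ^ 2 + norm (y - ?p) ^ 2"
    by (rule norm_add_Pythagorean) (simp add: orthogonal_def orth_perp[OF assms])
  then show ?thesis by simp
qed

lemma linj_surj: fixes M :: "real^'a::finite^'a"
  assumes "\<And>x. M *v x = 0 \<Longrightarrow> x = 0"
  shows "\<exists>x. M *v x = b"
proof -
  have "inj ((*v) M)"
    by (metis assms matrix_vector_mult_diff_distrib eq_iff_diff_eq_0 injI)
  then have "surj ((*v) M)"
    by (intro eucl.linear_injective_imp_surjective) auto
  then show ?thesis by (metis surjD)
qed

definition dg :: "('a::finite \<Rightarrow> real) \<Rightarrow> real^'a^'a" where
  "dg a = (\<chi> i j. if i = j then a i else 0)"

lemma dg_mv: "dg a *v v = (\<chi> i. a i * v$i)"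
  by (simp add: dg_def matrix_vector_mult_def vec_eq_iff if_distrib[of "\<lambda>x. x * _"] cong: if_cong)
lemma dg_mul: "dg a ** dg b = dg (\<lambda>i. a i * b i)"
  by (simp add: dg_def matrix_matrix_mult_def vec_eq_iff if_distrib[of "\<lambda>x. x * _"] cong: if_cong)

lemma dg_transpose: "transpose (dg a) = dg a"
  by (simp add: dg_def transpose_def vec_eq_iff)

lemma dg_sq: "norm (dg a *v v) ^ 2 = (\<Sum>i\<in>UNIV. (a i)^2 * (v$i)^2)"
  unfolding power2_norm_eq_inner by (simp add: dg_mv inner_vec_def power2_eq_square mult.assoc mult.left_commute)

lemma nsq: "norm (v::real^'a::finite) ^ 2 = (\<Sum>i\<in>UNIV. (v$i)^2)"
  unfolding power2_norm_eq_inner by (simp add: inner_vec_def power2_eq_square)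

lemma dg_norm_le: assumes "\<And>i. \<bar>a i\<bar> \<le> c"
  shows "norm (dg a *v v) \<le> c * norm v"
proof -
  have c: "c \<ge> 0" using assms[of undefined] by simp
  have "norm (dg a *v v) ^2 \<le> (\<Sum>i\<in>UNIV. c^2 * (v$i)^2)"
    unfolding dg_sq
    by (intro sum_mono mult_right_mono) (auto intro: power_mono[of "\<bar>a _\<bar>" c 2, simplified] assms)
  also have "\<dots> = (c * norm v)^2"
    by (simp add: power_mult_distrib nsq sum_distrib_left)
  finally show ?thesis using c by (simp add: power2_le_iff_abs_le)
qed

lemma dg_norm_ge: assumes "\<And>i. c \<le> \<bar>a i\<bar>" "c \<ge> 0"
  shows "c * norm v \<le> norm (dg a *v v)"
proof -
  have "(c * norm v)^2 = (\<Sum>i\<in>UNIV. c^2 * (v$i)^2)"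
    by (simp add: power_mult_distrib nsq sum_distrib_left)
  also have "\<dots> \<le> norm (dg a *v v) ^2"
    unfolding dg_sq
    by (intro sum_mono mult_right_mono) (auto intro: power_mono[of c "\<bar>a _\<bar>" 2, simplified] assms)
  finally show ?thesis using assms by (simp add: power2_le_iff_abs_le)
qed


lemma transpose_add: "transpose (A + B) = transpose A + transpose (B::real^'a::finite^'b::finite)"
  by (simp add: transpose_def vec_eq_iff)
lemma transpose_zero: "transpose (0::real^'a::finite^'b::finite) = 0"
  by (simp add: transpose_def vec_eq_iff)

lemma matrix_add_rdistrib: "(A + B) ** C = A ** C + B ** (C::real^'a::finite^'b::finite)"
  by (simp add: matrix_matrix_mult_def vec_eq_iff sum.distrib algebra_simps)

lemma block_mul:
  fixes X1 :: "real^'k::finite^'m::finite" and X2 :: "real^'r::finite^'m"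
    and Y1 :: "real^'k^'n::finite" and Y2 :: "real^'r^'n"
    and W1 :: "real^'k^'l::finite" and W2 :: "real^'r^'l"
  assumes "transpose Y1 ** Y1 = mat 1" "transpose Y2 ** Y2 = mat 1" "transpose Y1 ** Y2 = 0"
  shows "(X1 ** G1 ** transpose Y1 + X2 ** G2 ** transpose Y2) ** (Y1 ** H1 ** transpose W1 + Y2 ** H2 ** transpose W2)
       = X1 ** (G1 ** H1) ** transpose W1 + X2 ** (G2 ** H2) ** transpose W2"
proof -
  have a: "Z ** transpose Y1 ** Y1 = Z" for Z :: "real^'k^'m"
    by (metis assms(1) matrix_mul_assoc matrix_mul_rid)
  have b: "Z ** transpose Y2 ** Y2 = Z" for Z :: "real^'r^'m"
    by (metis assms(2) matrix_mul_assoc matrix_mul_rid)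
  have c: "Z ** transpose Y1 ** Y2 = 0" for Z :: "real^'k^'m"
    by (metis assms(3) matrix_mul_assoc times0_right)
  have d0: "transpose Y2 ** Y1 = 0"
    by (metis assms(3) matrix_transpose_mul transpose_transpose transpose_zero)
  have d: "Z ** transpose Y2 ** Y1 = 0" for Z :: "real^'r^'m"
    by (metis d0 matrix_mul_assoc times0_right)
  show ?thesis
    by (simp add: matrix_add_ldistrib matrix_add_rdistrib matrix_mul_assoc a b c d times0_left)
qed

lemma AAT_pow:
  fixes A :: "real^'n::finite^'m::finite"
    and Uk :: "real^'k::finite^'m" and Vk :: "real^'k^'n"
    and Ur :: "real^'r::finite^'m" and Vr :: "real^'r^'n"
  assumes "transpose Uk ** Uk = mat 1" "transpose Ur ** Ur = mat 1" "transpose Uk ** Ur = 0"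
    "transpose Vk ** Vk = mat 1" "transpose Vr ** Vr = mat 1" "transpose Vk ** Vr = 0"
    "A = Uk ** dg a ** transpose Vk + Ur ** dg b ** transpose Vr"
  shows "mat_pow (A ** transpose A) p ** A = Uk ** dg (\<lambda>i. a i ^ (2*p+1)) ** transpose Vk
     + Ur ** dg (\<lambda>i. b i ^ (2*p+1)) ** transpose Vr"
proof -
  have AT: "transpose A = Vk ** dg a ** transpose Uk + Vr ** dg b ** transpose Ur"
    using assms(7) by (simp add: matrix_transpose_mul dg_transpose matrix_mul_assoc transpose_add)
  have AA: "A ** transpose A = Uk ** dg (\<lambda>i. a i * a i) ** transpose Uk + Ur ** dg (\<lambda>i. b i * b i) ** transpose Ur"
  proof -
    have "A ** transpose A = (Uk ** dg a ** transpose Vk + Ur ** dg b ** transpose Vr) ** (Vk ** dg a ** transpose Uk + Vr ** dg b ** transpose Ur)"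
      using AT assms(7) by simp
    also have "\<dots> = Uk ** (dg a ** dg a) ** transpose Uk + Ur ** (dg b ** dg b) ** transpose Ur"
      by (rule block_mul) (use assms in auto)
    finally show ?thesis by (simp add: dg_mul)
  qed
  show ?thesis
  proof (induction p)
    case 0
    then show ?case by (simp add: mat_pow_def assms(7))
  next
    case (Suc p)
    have "mat_pow (A ** transpose A) (Suc p) ** A = (A ** transpose A) ** (mat_pow (A ** transpose A) p ** A)"
      by (simp add: mat_pow_def matrix_mul_assoc)
    also have "\<dots> = (Uk ** dg (\<lambda>i. a i * a i) ** transpose Uk + Ur ** dg (\<lambda>i. b i * b i) ** transpose Ur) **
       (Uk ** dg (\<lambda>i. a i ^ (2*p+1)) ** transpose Vk + Ur ** dg (\<lambda>i. b i ^ (2*p+1)) ** transpose Vr)"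
      by (subst Suc.IH, subst AA, rule refl)
    also have "\<dots> = Uk ** (dg (\<lambda>i. a i * a i) ** dg (\<lambda>i. a i ^ (2*p+1))) ** transpose Vk
        + Ur ** (dg (\<lambda>i. b i * b i) ** dg (\<lambda>i. b i ^ (2*p+1))) ** transpose Vr"
      by (rule block_mul) (use assms in auto)
    also have "\<dots> = Uk ** dg (\<lambda>i. a i ^ (2*Suc p+1)) ** transpose Vk
     + Ur ** dg (\<lambda>i. b i ^ (2*Suc p+1)) ** transpose Vr"
      by (simp add: dg_mul power_add power2_eq_square mult_ac)
    finally show ?case .
  qed
qed

lemma sv_full_set: "{W :: (real^'a::finite) set. subspace W \<and> dim W = CARD('a)} = {UNIV}"
proof -
  have "subspace W \<Longrightarrow> dim W = CARD('a) \<Longrightarrow> W = UNIV" for W :: "(real^'a) set"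
    by (metis dim_eq_full span_eq_iff DIM_cart DIM_real mult_1_right)
  then show ?thesis by (auto simp: DIM_cart)
qed

lemma sv_min:
  fixes M :: "real^'a::finite^'b::finite"
  shows "sing_val M CARD('a) \<ge> 0" "sing_val M CARD('a) * norm x \<le> norm (M *v x)"
proof -
  have sv: "sing_val M CARD('a) = (INF x \<in> {x. norm x = 1}. norm (M *v x))"
    unfolding sing_val_def sv_full_set by simp
  have ne: "{x::real^'a. norm x = 1} \<noteq> {}" using norm_axis_1 by blast
  show g: "sing_val M CARD('a) \<ge> 0" unfolding sv by (rule cINF_greatest[OF ne]) simp
  show "sing_val M CARD('a) * norm x \<le> norm (M *v x)"
  proof (cases "x = 0")
    case True then show ?thesis by simp
  next
    case False
    have "sing_val M CARD('a) \<le> norm (M *v (x /\<^sub>R norm x))"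
      unfolding sv by (rule cINF_lower) (auto intro: bdd_belowI[where m=0] simp: False)
    also have "\<dots> = norm (M *v x) / norm x"
      by (simp add: matrix_vector_mult_scaleR divide_inverse_commute)
    finally show ?thesis using False by (simp add: pos_le_divide_eq)
  qed
qed

lemma sv_max:
  fixes M :: "real^'a::finite^'b::finite"
  shows "norm (M *v x) \<le> sing_val M 1 * norm x"
proof (cases "x = 0")
  case True then show ?thesis by simp
next
  case False
  let ?F = "\<lambda>W. INF y \<in> {y \<in> W. norm y = 1}. norm (M *v y)"
  let ?WS = "{W :: (real^'a) set. subspace W \<and> dim W = 1}"
  have bl: "bounded_linear ((*v) M)" using linear_conv_bounded_linear matrix_vector_mul_linear by blast
  have bdd: "bdd_above (?F ` ?WS)"
  proof (rule bdd_aboveI2)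
    fix W assume W: "W \<in> ?WS"
    have "\<not> W \<subseteq> {0}"
      using W dim_subset[of W "{0::real^'a}"] by auto
    then obtain y where y: "y \<in> W" "y \<noteq> 0" by blast
    have yW: "y /\<^sub>R norm y \<in> {y \<in> W. norm y = 1}"
      using W y by (auto simp: subspace_scale)
    have "?F W \<le> norm (M *v (y /\<^sub>R norm y))"
      by (rule cINF_lower[OF _ yW]) (auto intro: bdd_belowI[where m=0])
    also have "\<dots> \<le> onorm ((*v) M) * norm (y /\<^sub>R norm y)" by (rule onorm[OF bl])
    also have "\<dots> = onorm ((*v) M)" using y by simp
    finally show "?F W \<le> onorm ((*v) M)" .
  qed
  have Wx: "span {x} \<in> ?WS" using False by (simp add: dim_span)
  have "norm (M *v x) / norm x \<le> ?F (span {x})"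
  proof (rule cINF_greatest)
    show "{y \<in> span {x}. norm y = 1} \<noteq> {}"
    proof -
      have "x /\<^sub>R norm x \<in> {y \<in> span {x}. norm y = 1}"
        using False by (auto simp: span_base span_scale)
      then show ?thesis by blast
    qed
  next
    fix y assume yy: "y \<in> {y \<in> span {x}. norm y = 1}"
    then obtain c where c0: "y = c *\<^sub>R x" by (auto simp: span_singleton)
    have c: "y = c *\<^sub>R x" "norm y = 1" using c0 yy by auto
    then have "\<bar>c\<bar> * norm x = 1" by simp
    then have "\<bar>c\<bar> = 1 / norm x" using False by (simp add: field_simps)
    then show "norm (M *v x) / norm x \<le> norm (M *v y)"
      using c by (simp add: matrix_vector_mult_scaleR)
  qed
  also have "\<dots> \<le> sing_val M 1"
    unfolding sing_val_def by (rule cSUP_upper[OF Wx bdd])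
  finally show ?thesis using False by (simp add: pos_divide_le_eq)
qed

theorem lemma8:
  fixes A :: "real^'n::finite^'m::finite"
    and Uk :: "real^'k::finite^'m" and Sk :: "real^'k^'k" and Vk :: "real^'k^'n"
    and Ur :: "real^'r::finite^'m" and Sr :: "real^'r^'r" and Vr :: "real^'r^'n"
    and \<sigma> :: "nat \<Rightarrow> real"
    and ek :: "'k \<Rightarrow> nat" and er :: "'r \<Rightarrow> nat"
    and p :: nat
    and S :: "real^'k^'n"
    and Q :: "real^'k^'m" and R :: "real^'k^'k"
    and UQA :: "real^'k^'k" and SQA :: "real^'k^'k" and VQA :: "real^'k^'n"
    and d :: "'k \<Rightarrow> real"
  assumes rank: "rank A = CARD('k) + CARD('r)"
    and ek: "bij_betw ek UNIV {1..CARD('k)}"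
    and er: "bij_betw er UNIV {CARD('k)+1..CARD('k)+CARD('r)}"
    and \<sigma>_mono: "\<And>i j. 1 \<le> i \<Longrightarrow> i \<le> j \<Longrightarrow> j \<le> CARD('k)+CARD('r) \<Longrightarrow> \<sigma> j \<le> \<sigma> i"
    and \<sigma>_pos: "\<sigma> (CARD('k)+CARD('r)) > 0"
    and Sk: "Sk = (\<chi> i j. if i = j then \<sigma> (ek i) else 0)"
    and Sr: "Sr = (\<chi> i j. if i = j then \<sigma> (er i) else 0)"
    and Uk_orth: "transpose Uk ** Uk = mat 1"
    and Ur_orth: "transpose Ur ** Ur = mat 1"
    and UkUr: "transpose Uk ** Ur = 0"
    and Vk_orth: "transpose Vk ** Vk = mat 1"
    and Vr_orth: "transpose Vr ** Vr = mat 1"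
    and VkVr: "transpose Vk ** Vr = 0"
    and svd: "A = Uk ** Sk ** transpose Vk + Ur ** Sr ** transpose Vr"
    and Q_orth: "transpose Q ** Q = mat 1"
    and QR: "mat_pow (A ** transpose A) p ** A ** S = Q ** R"
    and UQA_orth: "orthogonal_matrix UQA"
    and VQA_orth: "transpose VQA ** VQA = mat 1"
    and d_nonneg: "\<And>i. d i \<ge> 0"
    and d_mono: "\<And>i j. ek i \<le> ek j \<Longrightarrow> d j \<le> d i"
    and SQA: "SQA = (\<chi> i j. if i = j then d i else 0)"
    and svdQA: "transpose Q ** A = UQA ** SQA ** transpose VQA"
  shows "sing_val (transpose Vk ** S) CARD('k)
           * spec_norm (Uk ** transpose Uk - (Q ** UQA) ** transpose (Q ** UQA))
         \<le> (\<sigma> (CARD('k)+1) / \<sigma> (CARD('k))) ^ (2*p+1) * sing_val (transpose Vr ** S) 1"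
proof -
  define K where "K = CARD('k)"
  define q where "q = 2*p+1"
  define a where "a = (\<lambda>i. \<sigma> (ek i))"
  define b where "b = (\<lambda>i. \<sigma> (er i))"
  define O1 where "O1 = transpose Vk ** S"
  define O2 where "O2 = transpose Vr ** S"
  define Da where "Da = dg (\<lambda>i. a i ^ q)"
  define Db where "Db = dg (\<lambda>i. b i ^ q)"
  define Z where "Z = mat_pow (A ** transpose A) p ** A ** S"
  define s where "s = sing_val O1 K"
  define sv2 where "sv2 = sing_val O2 1"
  have K1: "K \<ge> 1" unfolding K_def by (simp add: Suc_leI)
  have r1: "CARD('r) \<ge> 1" by (simp add: Suc_leI)
  have sKr: "\<sigma> (K + CARD('r)) > 0" using \<sigma>_pos by (simp add: K_def)
  have sK1: "\<sigma> (K+1) \<ge> \<sigma> (K + CARD('r))" by (rule \<sigma>_mono) (use r1 in \<open>auto simp: K_def\<close>)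
  have sK: "\<sigma> K \<ge> \<sigma> (K+1)" by (rule \<sigma>_mono) (use K1 r1 in \<open>auto simp: K_def\<close>)
  have sKpos: "\<sigma> K > 0" "\<sigma> (K+1) > 0" using sK sK1 sKr by auto
  have Sk': "Sk = dg a" by (simp add: Sk dg_def a_def)
  have Sr': "Sr = dg b" by (simp add: Sr dg_def b_def)
  have Zeq: "Z = Uk ** Da ** O1 + Ur ** Db ** O2"
  proof -
    have "Z = (Uk ** Da ** transpose Vk + Ur ** Db ** transpose Vr) ** S"
      unfolding Z_def Da_def Db_def q_def
      by (subst AAT_pow[OF Uk_orth Ur_orth UkUr Vk_orth Vr_orth VkVr]) (use svd Sk' Sr' in auto)
    then show ?thesis by (simp add: matrix_add_rdistrib O1_def O2_def matrix_mul_assoc)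
  qed
  have Zv: "Z *v w = Uk *v (Da *v (O1 *v w)) + Ur *v (Db *v (O2 *v w))" for w
    by (simp add: Zeq matrix_vector_mult_add_rdistrib matrix_vector_mul_assoc matrix_mul_assoc)
  have ZQR: "Z *v w = Q *v (R *v w)" for w
    by (simp add: Z_def QR matrix_vector_mul_assoc)
  have Da_ge: "\<sigma> K ^ q * norm v \<le> norm (Da *v v)" for v
    unfolding Da_def
  proof (rule dg_norm_ge)
    fix i
    have "ek i \<in> {1..K}" using ek by (auto simp: bij_betw_def K_def)
    then have "\<sigma> K \<le> a i" unfolding a_def by (intro \<sigma>_mono) (auto simp: K_def)
    then show "\<sigma> K ^ q \<le> \<bar>a i ^ q\<bar>" using sKpos by (simp add: power_mono)
  qed (use sKpos in simp)
  have Db_le: "norm (Db *v v) \<le> \<sigma> (K+1) ^ q * norm v" for v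
    unfolding Db_def
  proof (rule dg_norm_le)
    fix i
    have "er i \<in> {K+1..K+CARD('r)}" using er by (auto simp: bij_betw_def K_def)
    then have "b i \<le> \<sigma> (K+1)" "\<sigma> (K+CARD('r)) \<le> b i" unfolding b_def
      by (intro \<sigma>_mono; auto simp: K_def)+
    then show "\<bar>b i ^ q\<bar> \<le> \<sigma> (K+1) ^ q" using sKr by (simp add: power_mono)
  qed
  have s0: "s \<ge> 0" and s_le: "\<And>w. s * norm w \<le> norm (O1 *v w)"
    unfolding s_def K_def using sv_min by auto
  have sv2_le: "\<And>w. norm (O2 *v w) \<le> sv2 * norm w"
    unfolding sv2_def using sv_max by auto
  have sv20: "sv2 \<ge> 0" using sv2_le[of "axis undefined 1"] norm_axis_1
    by (metis mult.right_neutral norm_ge_zero order_trans)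
  have UkUr_v: "transpose Uk *v (Ur *v v) = 0" for v
    by (simp add: matrix_vector_mul_assoc UkUr)
  define P where "P = (\<lambda>y. Uk *v (transpose Uk *v y))"
  define PQ where "PQ = (\<lambda>y. Q *v (transpose Q *v y))"
  have Pnorm: "norm (P y) \<le> norm y" for y
    using orth_pyth[OF Uk_orth, of y] unfolding P_def
    by (metis abs_norm_cancel le_add_same_cancel1 power2_le_iff_abs_le zero_le_power2 norm_ge_zero)
  have PZ: "P (Z *v w) = Uk *v (Da *v (O1 *v w))" for w
    unfolding P_def Zv by (simp add: matrix_vector_right_distrib UkUr_v orth_inv[OF Uk_orth])
  have PZ2: "Z *v w - P (Z *v w) = Ur *v (Db *v (O2 *v w))" for w
    unfolding PZ by (simp add: Zv)
  show ?thesis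
  proof (cases "s > 0")
    case False
    then have "s = 0" using s0 by simp
    moreover have "0 \<le> (\<sigma> (CARD('k)+1) / \<sigma> (CARD('k))) ^ (2*p+1) * sing_val (transpose Vr ** S) 1"
      using sKpos sv20 by (simp add: K_def sv2_def O2_def)
    ultimately show ?thesis by (simp add: s_def K_def O1_def)
  next
    case True
    define den where "den = \<sigma> K ^ q * s"
    define t' where "t' = \<sigma> (K+1) ^ q * sv2"
    have den: "den > 0" using True sKpos by (simp add: den_def)
    have t'0: "t' \<ge> 0" using sKpos sv20 by (simp add: t'_def)
    have wlow: "den * norm w \<le> norm (Da *v (O1 *v w))" for w
    proof -
      have "den * norm w = \<sigma> K ^ q * (s * norm w)" by (simp add: den_def)
      also have "\<dots> \<le> \<sigma> K ^ q * norm (O1 *v w)"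
        using s_le sKpos by (simp add: mult_left_mono)
      also have "\<dots> \<le> norm (Da *v (O1 *v w))" by (rule Da_ge)
      finally show ?thesis .
    qed
    have wup: "norm (Db *v (O2 *v w)) \<le> t' * norm w" for w
    proof -
      have "norm (Db *v (O2 *v w)) \<le> \<sigma> (K+1) ^ q * norm (O2 *v w)" by (rule Db_le)
      also have "\<dots> \<le> \<sigma> (K+1) ^ q * (sv2 * norm w)"
        using sv2_le sKpos by (simp add: mult_left_mono)
      finally show ?thesis by (simp add: t'_def)
    qed
    have KZ: "norm (Z *v w - P (Z *v w)) * den \<le> t' * norm (P (Z *v w))" for w
    proof -
      have "norm (Z *v w - P (Z *v w)) * den \<le> (t' * norm w) * den"
        unfolding PZ2 orth_norm[OF Ur_orth] using wup den by (simp add: mult_right_mono)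
      also have "\<dots> = t' * (den * norm w)" by simp
      also have "\<dots> \<le> t' * norm (P (Z *v w))"
        unfolding PZ orth_norm[OF Uk_orth] using wlow t'0 by (simp add: mult_left_mono)
      finally show ?thesis .
    qed
    have DOinj: "(Da ** O1) *v w = 0 \<Longrightarrow> w = 0" for w
      using wlow[of w] den by (simp add: matrix_vector_mul_assoc[symmetric] mult_le_0_iff)
    have Rinj: "R *v w = 0 \<Longrightarrow> w = 0" for w
    proof -
      assume "R *v w = 0"
      then have "Z *v w = 0" by (simp add: ZQR)
      then have "P (Z *v w) = 0" by (simp add: P_def)
      then have "Uk *v (Da *v (O1 *v w)) = 0" by (simp only: PZ)
      then have "norm (Da *v (O1 *v w)) = 0" by (metis orth_norm[OF Uk_orth] norm_zero)
      then show "w = 0" using DOinj by (simp add: matrix_vector_mul_assoc[symmetric])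
    qed
    have main: "norm (P y - PQ y) * den \<le> t' * norm y" for y
    proof -
      define y1 where "y1 = PQ y"
      define y2 where "y2 = y - y1"
      obtain w1 where w1: "R *v w1 = transpose Q *v y" using linj_surj[OF Rinj] by blast
      have y1Z: "y1 = Z *v w1" by (simp add: y1_def PQ_def ZQR w1)
      have b1: "norm (y1 - P y1) * den \<le> t' * norm y1"
        using KZ[of w1] Pnorm[of y1] t'0 unfolding y1Z[symmetric]
        by (meson mult_left_mono order_trans)
      define z where "z = P y2"
      obtain w2 where w2: "(Da ** O1) *v w2 = transpose Uk *v y2" using linj_surj[OF DOinj] by blast
      define x where "x = Z *v w2"
      have w2': "Da *v (O1 *v w2) = transpose Uk *v y2" using w2 by (simp add: matrix_vector_mul_assoc)
      have Px: "P x = z" unfolding x_def PZ z_def w2' by (simp add: P_def)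
      have xy2: "x \<bullet> y2 = 0"
        unfolding x_def ZQR y2_def y1_def PQ_def by (rule orth_perp[OF Q_orth])
      have zz: "z \<bullet> y2 = z \<bullet> z"
        using orth_perp[OF Uk_orth, of "transpose Uk *v y2" y2]
        unfolding z_def P_def by (simp add: inner_diff_right)
      have "z \<bullet> y2 = - ((x - z) \<bullet> y2)" using xy2 by (simp add: inner_diff_left)
      also have "\<dots> \<le> norm (x - z) * norm y2"
        using norm_cauchy_schwarz[of "z - x" y2] by (simp add: inner_diff_left norm_minus_commute)
      finally have "norm z ^ 2 \<le> norm (x - z) * norm y2"
        using zz by (simp add: power2_norm_eq_inner)
      then have "norm z ^ 2 * den \<le> norm (x - z) * den * norm y2"
        using den by (simp add: mult_right_mono mult.commute mult.left_commute)
      also have "\<dots> \<le> t' * norm z * norm y2"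
        using KZ[of w2] unfolding x_def[symmetric] Px by (simp add: mult_right_mono)
      finally have zn: "norm z ^ 2 * den \<le> t' * norm z * norm y2" .
      have b2: "norm z * den \<le> t' * norm y2"
      proof (cases "norm z = 0")
        case True then show ?thesis using t'0 by simp
      next
        case False
        then have "norm z * (norm z * den) \<le> norm z * (t' * norm y2)"
          using zn by (simp add: power2_eq_square mult_ac)
        then show ?thesis using False by (simp add: mult_le_cancel_left)
      qed
      have lin: "P y - PQ y = z - (y1 - P y1)"
        by (simp add: z_def P_def y2_def y1_def matrix_vector_mult_diff_distrib)
      have perp: "z \<bullet> (y1 - P y1) = 0"
        unfolding z_def P_def by (rule orth_perp[OF Uk_orth])
      have perp2: "z \<bullet> P y1 = y1 \<bullet> z" "P y1 \<bullet> z = y1 \<bullet> z" using perp by (simp_all add: inner_diff_right inner_commute)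
      have "(norm (P y - PQ y) * den) ^ 2 = (norm z * den) ^ 2 + (norm (y1 - P y1) * den) ^ 2"
        unfolding lin power_mult_distrib
        by (simp add: power2_norm_eq_inner inner_diff_left inner_diff_right perp perp2 algebra_simps inner_commute[of y1 z])
      also have "\<dots> \<le> (t' * norm y2) ^ 2 + (t' * norm y1) ^ 2"
        using b1 b2 den by (intro add_mono power_mono) auto
      also have "\<dots> = (t' * norm y) ^ 2"
        using orth_pyth[OF Q_orth, of y] unfolding y2_def y1_def PQ_def
        by (simp add: power_mult_distrib algebra_simps)
      finally show ?thesis using t'0 den
        by (simp add: power2_le_iff_abs_le)
    qed
    have Meq: "(Uk ** transpose Uk - (Q ** UQA) ** transpose (Q ** UQA)) *v y = P y - PQ y" for y
    proof -
      have "(Q ** UQA) ** transpose (Q ** UQA) = Q ** transpose Q"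
        using UQA_orth by (simp add: orthogonal_matrix_def matrix_transpose_mul matrix_mul_assoc[symmetric])
          (simp add: matrix_mul_assoc)
      then show ?thesis
        by (simp add: P_def PQ_def matrix_vector_mult_diff_rdistrib matrix_vector_mul_assoc)
    qed
    have sn: "spec_norm (Uk ** transpose Uk - (Q ** UQA) ** transpose (Q ** UQA)) \<le> t' / den"
      unfolding spec_norm_def
    proof (rule onorm_le)
      fix y
      show "norm ((Uk ** transpose Uk - (Q ** UQA) ** transpose (Q ** UQA)) *v y) \<le> t' / den * norm y"
        unfolding Meq using main[of y] den by (simp add: pos_le_divide_eq mult.commute mult.left_commute)
    qed
    have "s * spec_norm (Uk ** transpose Uk - (Q ** UQA) ** transpose (Q ** UQA)) \<le> s * (t' / den)"
      using sn s0 by (rule mult_left_mono)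
    also have "\<dots> = (\<sigma> (K+1) / \<sigma> K) ^ q * sv2"
      using True sKpos by (simp add: den_def t'_def power_divide)
    finally show ?thesis by (simp add: s_def K_def O1_def q_def sv2_def O2_def)
  qed
qed
end
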